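(* Let $X$ be a non-empty compact ultrametric space with a finite similarity structure $\mathrm{Sim}_X$ and let $\Gamma=\Gamma(\mathrm{Sim}_X)$. Under the action of $\Gamma$ on the set of vertices given by $\gamma\{[f_1,B_1],\dots,[f_k,B_k]\}=\{[\gamma f_1,B_1],\dots,[\gamma f_k,B_k]\}$, the stabilizer in $\Gamma$ of every vertex is finite.
   Context: A *ball* in $X$ is a closed metric ball of positive radius. A *finite similarity structure* $\mathrm{Sim}_X$ assigns to each ordered pair of balls $B_1,B_2$ a finite (possibly empty) set $\mathrm{Sim}_X(B_1,B_2)$ of surjective similarities $B_1\to B_2$, closed under identities, inverses, compositions, and restrictions to sub-balls (if $h\in\mathrm{Sim}_X(B_1,B_2)$ and $B_3\subseteq B_1$ is a ball, $h|_{B_3}\in\mathrm{Sim}_X(B_3,h(B_3))$). An embedding $h:B\to X$ ($B$ a ball) is *locally determined by* $\mathrm{Sim}_X$ if every $x\in B$ lies in a ball $B'\subseteq B$ with $h(B')$ a ball and $h|_{B'}\in\mathrm{Sim}_X(B',h(B'))$. $\Gamma(\mathrm{Sim}_X)$ is the group of homeomorphisms $X\to X$ locally determined by $\mathrm{Sim}_X$. Let $\mathcal S$ be the set of pairs $(f,B)$ with $B$ a ball and $f:B\to X$ an embedding locally determined by $\mathrm{Sim}_X$; $(f_1,B_1)\sim(f_2,B_2)$ iff $f_2h=f_1$ for some $h\in\mathrm{Sim}_X(B_1,B_2)$; $[f,B]$ is the class (for $\gamma\in\Gamma$, $[\gamma f,B]$ is a well-defined class). A *vertex* is a finite set $\{[f_1,B_1],\dots,[f_k,B_k]\}$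 of classes with $f_1(B_1),\dots,f_k(B_k)$ pairwise disjoint and with union $X$. *)

theory Defs
  imports "HOL-Analysis.Analysis"
begin

text \<open>The space X is a subset of a metric space type; its metric is the restriction of dist.\<close>

definition ultrametric :: "'a::metric_space set \<Rightarrow> bool" where
  "ultrametric X \<longleftrightarrow> (\<forall>x\<in>X. \<forall>y\<in>X. \<forall>z\<in>X. dist x z \<le> max (dist x y) (dist y z))"

definition is_ball :: "'a::metric_space set \<Rightarrow> 'a set \<Rightarrow> bool" where
  "is_ball X B \<longleftrightarrow> (\<exists>x\<in>X. \<exists>r>0. B = X \<inter> cball x r)"

definition similarity :: "'a::metric_space set \<Rightarrow> 'a set \<Rightarrow> ('a \<Rightarrow> 'a) \<Rightarrow> bool" where
  "similarity B1 B2 h \<longleftrightarrow> h ` B1 = B2 \<and>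
     (\<exists>c>0. \<forall>x\<in>B1. \<forall>y\<in>B1. dist (h x) (h y) = c * dist x y)"

text \<open>Maps in Sim(B1,B2) are represented extensionally (undefined outside B1),
  so that a map B1 -> B2 corresponds to exactly one HOL function.\<close>
definition finite_sim_structure ::
  "'a::metric_space set \<Rightarrow> ('a set \<Rightarrow> 'a set \<Rightarrow> ('a \<Rightarrow> 'a) set) \<Rightarrow> bool" where
  "finite_sim_structure X Sim \<longleftrightarrow>
     (\<forall>B1 B2. is_ball X B1 \<longrightarrow> is_ball X B2 \<longrightarrow>
        finite (Sim B1 B2) \<and> Sim B1 B2 \<subseteq> extensional B1 \<and>
        (\<forall>h\<in>Sim B1 B2. similarity B1 B2 h)) \<and>
     (\<forall>B. is_ball X B \<longrightarrow> restrict id B \<in> Sim B B) \<and>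
     (\<forall>B1 B2. is_ball X B1 \<longrightarrow> is_ball X B2 \<longrightarrow>
        (\<forall>h\<in>Sim B1 B2. restrict (inv_into B1 h) B2 \<in> Sim B2 B1)) \<and>
     (\<forall>B1 B2 B3. is_ball X B1 \<longrightarrow> is_ball X B2 \<longrightarrow> is_ball X B3 \<longrightarrow>
        (\<forall>h\<in>Sim B1 B2. \<forall>g\<in>Sim B2 B3. restrict (g \<circ> h) B1 \<in> Sim B1 B3)) \<and>
     (\<forall>B1 B2 B3. is_ball X B1 \<longrightarrow> is_ball X B2 \<longrightarrow> is_ball X B3 \<longrightarrow> B3 \<subseteq> B1 \<longrightarrow>
        (\<forall>h\<in>Sim B1 B2. is_ball X (h ` B3) \<and> restrict h B3 \<in> Sim B3 (h ` B3)))"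

definition embedding_into :: "'a::metric_space set \<Rightarrow> 'a set \<Rightarrow> ('a \<Rightarrow> 'a) \<Rightarrow> bool" where
  "embedding_into X B h \<longleftrightarrow> h ` B \<subseteq> X \<and> (\<exists>g. homeomorphism B (h ` B) h g)"

definition locally_determined ::
  "'a::metric_space set \<Rightarrow> ('a set \<Rightarrow> 'a set \<Rightarrow> ('a \<Rightarrow> 'a) set) \<Rightarrow> 'a set \<Rightarrow> ('a \<Rightarrow> 'a) \<Rightarrow> bool" where
  "locally_determined X Sim B h \<longleftrightarrow>
     (\<forall>x\<in>B. \<exists>B'. is_ball X B' \<and> x \<in> B' \<and> B' \<subseteq> B \<and> is_ball X (h ` B') \<and>
        restrict h B' \<in> Sim B' (h ` B'))"

definition GammaSim :: "'a::metric_space set \<Rightarrow> ('a set \<Rightarrow> 'a set \<Rightarrow> ('a \<Rightarrow> 'a) set) \<Rightarrow> ('a \<Rightarrow> 'a) set" where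
  "GammaSim X Sim = {\<gamma>. \<gamma> \<in> extensional X \<and> (\<exists>g. homeomorphism X X \<gamma> g) \<and>
                      locally_determined X Sim X \<gamma>}"

definition Spairs :: "'a::metric_space set \<Rightarrow> ('a set \<Rightarrow> 'a set \<Rightarrow> ('a \<Rightarrow> 'a) set) \<Rightarrow> (('a \<Rightarrow> 'a) \<times> 'a set) set" where
  "Spairs X Sim = {(f, B). is_ball X B \<and> embedding_into X B f \<and> locally_determined X Sim B f}"

definition pair_rel ::
  "('a set \<Rightarrow> 'a set \<Rightarrow> ('a \<Rightarrow> 'a) set) \<Rightarrow> ('a \<Rightarrow> 'a) \<times> 'a set \<Rightarrow> ('a \<Rightarrow> 'a) \<times> 'a set \<Rightarrow> bool" where
  "pair_rel Sim p q \<longleftrightarrow> (\<exists>h\<in>Sim (snd p) (snd q). \<forall>x\<in>snd p. fst q (h x) = fst p x)"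

definition cls :: "'a::metric_space set \<Rightarrow> ('a set \<Rightarrow> 'a set \<Rightarrow> ('a \<Rightarrow> 'a) set) \<Rightarrow> ('a \<Rightarrow> 'a) \<Rightarrow> 'a set \<Rightarrow> (('a \<Rightarrow> 'a) \<times> 'a set) set" where
  "cls X Sim f B = {q \<in> Spairs X Sim. pair_rel Sim (f, B) q}"

definition is_vertex :: "'a::metric_space set \<Rightarrow> ('a set \<Rightarrow> 'a set \<Rightarrow> ('a \<Rightarrow> 'a) set) \<Rightarrow> (('a \<Rightarrow> 'a) \<times> 'a set) set set \<Rightarrow> bool" where
  "is_vertex X Sim V \<longleftrightarrow>
     (\<exists>k::nat. \<exists>fs Bs. (\<forall>i<k. (fs i, Bs i) \<in> Spairs X Sim) \<and>
        V = {cls X Sim (fs i) (Bs i) | i. i < k} \<and>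
        (\<forall>i<k. \<forall>j<k. i \<noteq> j \<longrightarrow> fs i ` Bs i \<inter> fs j ` Bs j = {}) \<and>
        (\<Union>i<k. fs i ` Bs i) = X)"

text \<open>Action of gamma on a vertex: replace each class [f,B] by [gamma o f, B]
  (well defined; here taken over all representatives).\<close>
definition vertex_act :: "'a::metric_space set \<Rightarrow> ('a set \<Rightarrow> 'a set \<Rightarrow> ('a \<Rightarrow> 'a) set) \<Rightarrow> ('a \<Rightarrow> 'a) \<Rightarrow> (('a \<Rightarrow> 'a) \<times> 'a set) set set \<Rightarrow> (('a \<Rightarrow> 'a) \<times> 'a set) set set" where
  "vertex_act X Sim \<gamma> V = {cls X Sim (\<gamma> \<circ> f) B | f B. \<exists>c\<in>V. (f, B) \<in> c}"

end

theory Submission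
  imports Defs
begin

theorem lemma6p2:
  fixes X :: "'a::metric_space set"
    and Sim :: "'a set \<Rightarrow> 'a set \<Rightarrow> ('a \<Rightarrow> 'a) set"
    and V :: "(('a \<Rightarrow> 'a) \<times> 'a set) set set"
  assumes "X \<noteq> {}" and "compact X" and "ultrametric X"
    and fss: "finite_sim_structure X Sim"
    and "is_vertex X Sim V"
  shows "finite {\<gamma> \<in> GammaSim X Sim. vertex_act X Sim \<gamma> V = V}"
proof -
  obtain k :: nat and fs Bs where sp: "\<And>i. i<k \<Longrightarrow> (fs i, Bs i) \<in> Spairs X Sim"
    and Vd: "V = {cls X Sim (fs i) (Bs i) | i. i < k}"
    and cov: "(\<Union>i<k. fs i ` Bs i) = X"
    using assms(5) unfolding is_vertex_def proof (elim exE conjE)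
    fix k :: nat and fs Bs assume a: "\<forall>i<k. (fs i, Bs i) \<in> Spairs X Sim"
      "V = {cls X Sim (fs i) (Bs i) | i. i < k}" "(\<Union>i<k. fs i ` Bs i) = X"
    show thesis by (rule that[of k fs Bs]) (use a in blast)+
  qed
  have fss1: "\<forall>B1 B2. is_ball X B1 \<longrightarrow> is_ball X B2 \<longrightarrow>
        finite (Sim B1 B2) \<and> Sim B1 B2 \<subseteq> extensional B1 \<and>
        (\<forall>h\<in>Sim B1 B2. similarity B1 B2 h)"
    using conjunct1[OF fss[unfolded finite_sim_structure_def]] .
  have fss2: "\<forall>B. is_ball X B \<longrightarrow> restrict id B \<in> Sim B B"
    using conjunct1[OF conjunct2[OF fss[unfolded finite_sim_structure_def]]] .
  have ball: "\<And>i. i<k \<Longrightarrow> is_ball X (Bs i)" using sp unfolding Spairs_def by blast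
  have self: "\<And>i. i<k \<Longrightarrow> (fs i, Bs i) \<in> cls X Sim (fs i) (Bs i)"
  proof -
    fix i assume i: "i<k"
    have "restrict id (Bs i) \<in> Sim (Bs i) (Bs i)" using fss2 ball[OF i] by blast
    then show "(fs i, Bs i) \<in> cls X Sim (fs i) (Bs i)"
      using sp[OF i] unfolding cls_def pair_rel_def
      by (simp, intro bexI[of _ "restrict id (Bs i)"]) auto
  qed
  define S where "S i = (\<Union>j<k. {j} \<times> Sim (Bs i) (Bs j))" for i
  define P where "P \<gamma> i p = (\<forall>x\<in>Bs i. fs (fst p) (snd p x) = \<gamma> (fs i x))" for \<gamma> i p
  define Stab where "Stab = {\<gamma> \<in> GammaSim X Sim. vertex_act X Sim \<gamma> V = V}"
  define F where "F \<gamma> = (\<lambda>i\<in>{..<k}. SOME p. p \<in> S i \<and> P \<gamma> i p)" for \<gamma>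
  have ex: "\<exists>p. p \<in> S i \<and> P \<gamma> i p" if g: "\<gamma> \<in> Stab" and i: "i < k" for \<gamma> i
  proof -
    have "cls X Sim (\<gamma> \<circ> fs i) (Bs i) \<in> vertex_act X Sim \<gamma> V"
      unfolding vertex_act_def
    proof (intro CollectI exI conjI)
      show "cls X Sim (\<gamma> \<circ> fs i) (Bs i) = cls X Sim (\<gamma> \<circ> fs i) (Bs i)" ..
      show "\<exists>c\<in>V. (fs i, Bs i) \<in> c" using self[OF i] i Vd by blast
    qed
    then have "cls X Sim (\<gamma> \<circ> fs i) (Bs i) \<in> V" using g unfolding Stab_def by simp
    then obtain j where j: "j<k" and eq: "cls X Sim (\<gamma> \<circ> fs i) (Bs i) = cls X Sim (fs j) (Bs j)"
      using Vd by blast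
    have "(fs j, Bs j) \<in> cls X Sim (\<gamma> \<circ> fs i) (Bs i)" using eq self[OF j] by simp
    then obtain h where h: "h \<in> Sim (Bs i) (Bs j)" and hx: "\<forall>x\<in>Bs i. fs j (h x) = \<gamma> (fs i x)"
      unfolding cls_def pair_rel_def by auto
    show ?thesis
      apply (rule exI[of _ "(j,h)"])
      using h hx j unfolding S_def P_def by auto
  qed
  have fin: "finite (PiE {..<k} S)"
  proof (rule finite_PiE)
    show "finite {..<k}" by simp
    fix i assume "i \<in> {..<k}"
    then have i: "i<k" by simp
    have "finite (Sim (Bs i) (Bs j))" if "j<k" for j
      using fss1 ball[OF i] ball[OF that] by blast
    then show "finite (S i)" unfolding S_def by auto
  qed
  have img: "F ` Stab \<subseteq> PiE {..<k} S"
  proof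
    fix q assume "q \<in> F ` Stab"
    then obtain \<gamma> where g: "\<gamma> \<in> Stab" and q: "q = F \<gamma>" by blast
    show "q \<in> PiE {..<k} S"
      unfolding q F_def
    proof (rule restrict_PiE_iff[THEN iffD2], intro ballI)
      fix i assume "i \<in> {..<k}"
      then have i: "i<k" by simp
      show "(SOME p. p \<in> S i \<and> P \<gamma> i p) \<in> S i" using someI_ex[OF ex[OF g i]] by blast
    qed
  qed
  have inj: "inj_on F Stab"
  proof (rule inj_onI)
    fix \<gamma> \<gamma>' assume g: "\<gamma> \<in> Stab" and g': "\<gamma>' \<in> Stab" and e: "F \<gamma> = F \<gamma>'"
    have ext: "\<gamma> \<in> extensional X" "\<gamma>' \<in> extensional X"
      using g g' unfolding Stab_def GammaSim_def by simp_all
    show "\<gamma> = \<gamma>'"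
    proof
      fix y
      show "\<gamma> y = \<gamma>' y"
      proof (cases "y \<in> X")
        case False then show ?thesis using ext by (simp add: extensional_def)
      next
        case True
        then obtain i x where i: "i<k" and x: "x \<in> Bs i" and y: "y = fs i x"
          using cov by blast
        have "F \<gamma> i = F \<gamma>' i" using e by simp
        then have "(SOME p. p \<in> S i \<and> P \<gamma> i p) = (SOME p. p \<in> S i \<and> P \<gamma>' i p)"
          using i unfolding F_def by simp
        moreover have "P \<gamma> i (SOME p. p \<in> S i \<and> P \<gamma> i p)"
          using someI_ex[OF ex[OF g i]] by blast
        moreover have "P \<gamma>' i (SOME p. p \<in> S i \<and> P \<gamma>' i p)"
          using someI_ex[OF ex[OF g' i]] by blast
        ultimately have "P \<gamma> i (SOME p. p \<in> S i \<and> P \<gamma>' i p)" "P \<gamma>' i (SOME p. p \<in> S i \<and> P \<gamma>' i p)" by simp_all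
        then show ?thesis using x y unfolding P_def by simp
      qed
    qed
  qed
  have "finite Stab" using inj_on_finite[OF inj img fin] .
  then show ?thesis unfolding Stab_def .
qed

end
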